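(* Let $S=\mathcal{OR}_n$ and $\sigma\in S$. Then (i) $\sigma S=\{\tau\in S: J(\tau)\subseteq J(\sigma)\}$; (ii) $S\sigma=\{\tau\in S: I(\tau)\subseteq I(\sigma)\}$; (iii) if $\mathrm{rk}(\sigma)\ne m$, then $S\sigma S=\{\tau\in S:\mathrm{rk}(\tau)\le\mathrm{rk}(\sigma)\}$; if $\mathrm{rk}(\sigma)=m$, then $S\sigma S=\{\tau\in S:\mathrm{rk}(\tau)<m, \text{ or } \mathrm{rk}(\tau)=m \text{ and } \mathrm{tp}(\tau)=\mathrm{tp}(\sigma)\}$.
   Context: Let $m\ge 1$, $n=2m$, $\mathbf n=\{1,\dots,n\}$, $\theta(i)=n+1-i$, written $\bar i$. A proper subset $I\subset\mathbf n$ is admissible if $I\cap\theta(I)=\emptyset$; $\mathbf n$ and $\emptyset$ are also admissible. For an injective partial map $\sigma$ of $\mathbf n$, $I(\sigma)$ is its domain, $J(\sigma)$ its image, $\mathrm{rk}(\sigma)=|I(\sigma)|$; the product $\sigma\tau$ is composition of partial maps (apply $\tau$ first). $W=\{\sigma\in S_n:\sigma(\bar i)=\overline{\sigma(i)}\ \forall i\}$, $W'=\{\sigma\in W:|\sigma(\{1,\dots,m\})\cap\{m+1,\dots,n\}|\text{ even}\}$. An admissible $m$-subset is of type I if it contains an even number of elements $>m$, type II otherwise. $\mathcal{OR}_n$ consists of the injective partial maps $\sigma$ with: $\mathrm{rk}(\sigma)<m$ and $I(\sigma),J(\sigma)$ admissible; or $\mathrm{rk}(\sigma)=m$ and $I(\sigma),J(\sigma)$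 admissible of the same type; or $\sigma\in W'$. It is a monoid under composition. For $\mathrm{rk}(\sigma)=m$, $\mathrm{tp}(\sigma)$ denotes the type of $I(\sigma)$. *)

theory Defs
  imports Main
begin

text \<open>Throughout, the parameter is m, and n = 2 m. Injective partial maps of
 {1..n} are represented as maps nat \<rightharpoonup> nat with domain and range
 inside {1..n}, injective on their domain. The product sigma tau is
 composition of partial maps applying tau first, i.e. map_comp sigma tau.\<close>

definition theta :: "nat \<Rightarrow> nat \<Rightarrow> nat" where
  "theta n i = n + 1 - i"

definition admissible :: "nat \<Rightarrow> nat set \<Rightarrow> bool" where
  "admissible n I \<longleftrightarrow> I = {1..n} \<or> I = {} \<or>
     (I \<subset> {1..n} \<and> I \<inter> theta n ` I = {})"

definition partial_inj :: "nat \<Rightarrow> (nat \<rightharpoonup> nat) \<Rightarrow> bool" where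
  "partial_inj n \<sigma> \<longleftrightarrow> dom \<sigma> \<subseteq> {1..n} \<and> ran \<sigma> \<subseteq> {1..n} \<and> inj_on \<sigma> (dom \<sigma>)"

definition rk :: "(nat \<rightharpoonup> nat) \<Rightarrow> nat" where
  "rk \<sigma> = card (dom \<sigma>)"

definition W :: "nat \<Rightarrow> (nat \<rightharpoonup> nat) set" where
  "W n = {\<sigma>. partial_inj n \<sigma> \<and> dom \<sigma> = {1..n} \<and>
            (\<forall>i\<in>{1..n}. \<sigma> (theta n i) = map_option (theta n) (\<sigma> i))}"

definition W' :: "nat \<Rightarrow> (nat \<rightharpoonup> nat) set" where
  "W' m = {\<sigma>\<in>W (2*m). even (card ({y. \<exists>x\<in>{1..m}. \<sigma> x = Some y} \<inter> {m+1..2*m}))}"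

text \<open>Type I (True) / type II (False) of an admissible m-subset.\<close>
definition typeI :: "nat \<Rightarrow> nat set \<Rightarrow> bool" where
  "typeI m I \<longleftrightarrow> even (card {x\<in>I. x > m})"

definition tp :: "nat \<Rightarrow> (nat \<rightharpoonup> nat) \<Rightarrow> bool" where
  "tp m \<sigma> = typeI m (dom \<sigma>)"

definition OR :: "nat \<Rightarrow> (nat \<rightharpoonup> nat) set" where
  "OR m = {\<sigma>. partial_inj (2*m) \<sigma> \<and>
     ((rk \<sigma> < m \<and> admissible (2*m) (dom \<sigma>) \<and> admissible (2*m) (ran \<sigma>))
    \<or> (rk \<sigma> = m \<and> admissible (2*m) (dom \<sigma>) \<and> admissible (2*m) (ran \<sigma>)
         \<and> typeI m (dom \<sigma>) = typeI m (ran \<sigma>))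
    \<or> \<sigma> \<in> W' m)}"

end

theory Submission
  imports Defs
begin


lemma theta_in: "x \<in> {1..2*m} \<Longrightarrow> theta (2*m) x \<in> {1..2*m}"
  by (auto simp: theta_def)
lemma theta_theta: "x \<in> {1..2*m} \<Longrightarrow> theta (2*m) (theta (2*m) x) = x"
  by (auto simp: theta_def)
lemma theta_gt: "x \<in> {1..2*m} \<Longrightarrow> (theta (2*m) x > m) = (x \<le> m)"
  by (auto simp: theta_def)
lemma theta_inj: "inj_on (theta (2*m)) {1..2*m}"
  by (auto simp: inj_on_def theta_def)

definition adm0 :: "nat \<Rightarrow> nat set \<Rightarrow> bool" where
  "adm0 m A \<longleftrightarrow> A \<subseteq> {1..2*m} \<and> A \<inter> theta (2*m) ` A = {}"

lemma not_adm0_full: "m \<ge> 1 \<Longrightarrow> \<not> adm0 m {1..2*m}"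
proof
  assume "m \<ge> 1" "adm0 m {1..2*m}"
  then have "1 \<in> {1..2*m}" "theta (2*m) 1 \<in> {1..2*m}" by (auto simp: theta_def)
  hence "theta (2*m) 1 \<in> {1..2*m} \<inter> theta (2*m) ` {1..2*m}" by auto
  with \<open>adm0 m {1..2*m}\<close> show False unfolding adm0_def by blast
qed

lemma admissible_iff: "m \<ge> 1 \<Longrightarrow> admissible (2*m) A = (A = {1..2*m} \<or> adm0 m A)"
  unfolding admissible_def
  using not_adm0_full[of m] unfolding adm0_def by auto

lemma adm0_subset: "adm0 m A \<Longrightarrow> B \<subseteq> A \<Longrightarrow> adm0 m B"
  unfolding adm0_def by blast

lemma adm0_card: assumes "adm0 m A" shows "card A \<le> m"
proof -
  have sub: "A \<subseteq> {1..2*m}" using assms by (auto simp: adm0_def)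
  have "card (theta (2*m) ` A) = card A"
    using card_image[OF inj_on_subset[OF theta_inj sub]] .
  moreover have "A \<union> theta (2*m) ` A \<subseteq> {1..2*m}" using sub theta_in by blast
  hence "card (A \<union> theta (2*m) ` A) \<le> 2*m" using card_mono[of "{1..2*m}"] by fastforce
  moreover have "card (A \<union> theta (2*m) ` A) = card A + card (theta (2*m) ` A)"
    using assms sub by (intro card_Un_disjoint) (auto simp: adm0_def intro: finite_subset)
  ultimately show ?thesis by linarith
qed

lemma adm0_full: assumes "adm0 m A" "card A = m" "x \<in> {1..2*m}"
  shows "(x \<in> A) \<longleftrightarrow> theta (2*m) x \<notin> A"
proof -
  have sub: "A \<subseteq> {1..2*m}" using assms by (auto simp: adm0_def)
  have c1: "card (theta (2*m) ` A) = card A"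
    using card_image[OF inj_on_subset[OF theta_inj sub]] .
  have "A \<union> theta (2*m) ` A \<subseteq> {1..2*m}" using sub theta_in by blast
  moreover have "card (A \<union> theta (2*m) ` A) = card A + card (theta (2*m) ` A)"
    using assms sub by (intro card_Un_disjoint) (auto simp: adm0_def intro: finite_subset)
  ultimately have eq: "A \<union> theta (2*m) ` A = {1..2*m}"
    using c1 assms(2) by (intro card_subset_eq) auto
  show ?thesis
  proof
    assume "x \<in> A" thus "theta (2*m) x \<notin> A" using assms(1) by (auto simp: adm0_def)
  next
    assume "theta (2*m) x \<notin> A"
    moreover have "x \<in> A \<union> theta (2*m) ` A" using eq assms(3) by auto
    ultimately show "x \<in> A" using sub theta_theta by fastforce
  qed
qed

lemma pi_finite: "partial_inj n \<sigma> \<Longrightarrow> finite (dom \<sigma>) \<and> finite (ran \<sigma>)"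
  unfolding partial_inj_def by (meson finite_atLeastAtMost finite_subset)

lemma ran_eq_img: "ran \<sigma> = (\<lambda>x. the (\<sigma> x)) ` dom \<sigma>"
  by (force simp: ran_def dom_def)

lemma pi_inj: "partial_inj n \<sigma> \<Longrightarrow> inj_on (\<lambda>x. the (\<sigma> x)) (dom \<sigma>)"
  unfolding partial_inj_def inj_on_def by (metis domD option.sel)

lemma pi_card_ran: "partial_inj n \<sigma> \<Longrightarrow> card (ran \<sigma>) = card (dom \<sigma>)"
  unfolding ran_eq_img by (rule card_image) (rule pi_inj)

lemma dom_comp: "dom (\<sigma> \<circ>\<^sub>m \<tau>) = {x \<in> dom \<tau>. the (\<tau> x) \<in> dom \<sigma>}"
proof (intro set_eqI iffI)
  fix x assume "x \<in> dom (\<sigma> \<circ>\<^sub>m \<tau>)"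
  then obtain y where "(\<sigma> \<circ>\<^sub>m \<tau>) x = Some y" by blast
  then obtain k where "\<tau> x = Some k" "\<sigma> k = Some y" unfolding map_comp_Some_iff by blast
  then show "x \<in> {x \<in> dom \<tau>. the (\<tau> x) \<in> dom \<sigma>}" by auto
next
  fix x assume "x \<in> {x \<in> dom \<tau>. the (\<tau> x) \<in> dom \<sigma>}"
  then obtain k y where "\<tau> x = Some k" "\<sigma> k = Some y" by auto
  then show "x \<in> dom (\<sigma> \<circ>\<^sub>m \<tau>)" by auto
qed

lemma ran_comp: "ran (\<sigma> \<circ>\<^sub>m \<tau>) = (\<lambda>x. the (\<sigma> x)) ` (ran \<tau> \<inter> dom \<sigma>)"
proof (intro set_eqI iffI)
  fix y assume "y \<in> ran (\<sigma> \<circ>\<^sub>m \<tau>)"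
  then obtain x where "(\<sigma> \<circ>\<^sub>m \<tau>) x = Some y" unfolding ran_def by blast
  then obtain k where "\<tau> x = Some k" "\<sigma> k = Some y" unfolding map_comp_Some_iff by blast
  then have "k \<in> ran \<tau> \<inter> dom \<sigma>" "y = the (\<sigma> k)" by (auto simp: ran_def)
  then show "y \<in> (\<lambda>x. the (\<sigma> x)) ` (ran \<tau> \<inter> dom \<sigma>)" by blast
next
  fix y assume "y \<in> (\<lambda>x. the (\<sigma> x)) ` (ran \<tau> \<inter> dom \<sigma>)"
  then obtain k where k: "k \<in> ran \<tau>" "k \<in> dom \<sigma>" "y = the (\<sigma> k)" by blast
  then obtain x where "\<tau> x = Some k" unfolding ran_def by blast
  moreover have "\<sigma> k = Some y" using k by auto
  ultimately have "(\<sigma> \<circ>\<^sub>m \<tau>) x = Some y" by simp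
  then show "y \<in> ran (\<sigma> \<circ>\<^sub>m \<tau>)" unfolding ran_def by blast
qed

lemma ran_comp_sub: "ran (\<sigma> \<circ>\<^sub>m \<tau>) \<subseteq> ran \<sigma>"
  unfolding ran_comp ran_eq_img[of \<sigma>] by (intro image_mono Int_lower2)

lemma pi_comp: assumes "partial_inj n \<sigma>" "partial_inj n \<tau>" shows "partial_inj n (\<sigma> \<circ>\<^sub>m \<tau>)"
  unfolding partial_inj_def
proof (intro conjI)
  have d1: "dom (\<sigma> \<circ>\<^sub>m \<tau>) \<subseteq> dom \<tau>" unfolding dom_comp by blast
  have d2: "dom \<tau> \<subseteq> {1..n}" using assms(2) by (simp add: partial_inj_def)
  show "dom (\<sigma> \<circ>\<^sub>m \<tau>) \<subseteq> {1..n}" by (rule subset_trans[OF d1 d2])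
  have r2: "ran \<sigma> \<subseteq> {1..n}" using assms(1) by (simp add: partial_inj_def)
  show "ran (\<sigma> \<circ>\<^sub>m \<tau>) \<subseteq> {1..n}" by (rule subset_trans[OF ran_comp_sub r2])
  show "inj_on (\<sigma> \<circ>\<^sub>m \<tau>) (dom (\<sigma> \<circ>\<^sub>m \<tau>))"
  proof (rule inj_onI)
    fix x y assume "x \<in> dom (\<sigma> \<circ>\<^sub>m \<tau>)" "y \<in> dom (\<sigma> \<circ>\<^sub>m \<tau>)" and e: "(\<sigma> \<circ>\<^sub>m \<tau>) x = (\<sigma> \<circ>\<^sub>m \<tau>) y"
    then have xd: "x \<in> dom \<tau>" "the (\<tau> x) \<in> dom \<sigma>" and yd: "y \<in> dom \<tau>" "the (\<tau> y) \<in> dom \<sigma>"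
      unfolding dom_comp by blast+
    obtain a where a: "\<tau> x = Some a" using xd(1) by blast
    obtain b where b: "\<tau> y = Some b" using yd(1) by blast
    have ad: "a \<in> dom \<sigma>" using xd(2) a by simp
    have bd: "b \<in> dom \<sigma>" using yd(2) b by simp
    have "(\<sigma> \<circ>\<^sub>m \<tau>) x = \<sigma> a" using a by (rule map_comp_simps(2))
    moreover have "(\<sigma> \<circ>\<^sub>m \<tau>) y = \<sigma> b" using b by (rule map_comp_simps(2))
    ultimately have "\<sigma> a = \<sigma> b" using e by simp
    hence "a = b" using ad bd assms(1) unfolding partial_inj_def inj_on_def by blast
    hence "\<tau> x = \<tau> y" using a b by simp
    moreover have "x \<in> dom \<tau>" "y \<in> dom \<tau>" using xd yd by auto
    ultimately show "x = y" using assms(2) unfolding partial_inj_def inj_on_def by blast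
  qed
qed

lemma rk_comp_le1: "partial_inj n \<sigma> \<Longrightarrow> partial_inj n \<tau> \<Longrightarrow> rk (\<sigma> \<circ>\<^sub>m \<tau>) \<le> rk \<tau>"
  unfolding rk_def dom_comp by (rule card_mono) (auto simp: pi_finite)

lemma rk_comp_le2: assumes "partial_inj n \<sigma>" "partial_inj n \<tau>" shows "rk (\<sigma> \<circ>\<^sub>m \<tau>) \<le> rk \<sigma>"
proof -
  have "card (dom (\<sigma> \<circ>\<^sub>m \<tau>)) = card ((\<lambda>x. the (\<tau> x)) ` dom (\<sigma> \<circ>\<^sub>m \<tau>))"
    by (rule card_image[symmetric], rule inj_on_subset[OF pi_inj[OF assms(2)]]) (auto simp: dom_comp)
  also have "\<dots> \<le> card (dom \<sigma>)"
    by (rule card_mono) (auto simp: pi_finite[OF assms(1)] dom_comp)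
  finally show ?thesis by (simp add: rk_def)
qed

definition gW :: "(nat \<rightharpoonup> nat) \<Rightarrow> nat \<Rightarrow> nat" where "gW \<sigma> x = the (\<sigma> x)"

lemma W_props: assumes "\<sigma> \<in> W (2*m)"
  shows "inj_on (gW \<sigma>) {1..2*m}" "gW \<sigma> ` {1..2*m} = {1..2*m}"
    "\<And>x. x \<in> {1..2*m} \<Longrightarrow> \<sigma> x = Some (gW \<sigma> x)"
    "\<And>x. x \<in> {1..2*m} \<Longrightarrow> gW \<sigma> (theta (2*m) x) = theta (2*m) (gW \<sigma> x)"
    "ran \<sigma> = {1..2*m}" "dom \<sigma> = {1..2*m}"
proof -
  have pi: "partial_inj (2*m) \<sigma>" and d: "dom \<sigma> = {1..2*m}"
    and c: "\<forall>i\<in>{1..2*m}. \<sigma> (theta (2*m) i) = map_option (theta (2*m)) (\<sigma> i)"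
    using assms by (auto simp: W_def)
  show "dom \<sigma> = {1..2*m}" by fact
  show i: "inj_on (gW \<sigma>) {1..2*m}" unfolding gW_def[abs_def] using pi_inj[OF pi] unfolding d .
  show s: "\<And>x. x \<in> {1..2*m} \<Longrightarrow> \<sigma> x = Some (gW \<sigma> x)"
  proof -
    fix x assume "x \<in> {1..2*m}" then have "x \<in> dom \<sigma>" using d by simp
    then show "\<sigma> x = Some (gW \<sigma> x)" by (auto simp: gW_def)
  qed
  have r: "ran \<sigma> = gW \<sigma> ` {1..2*m}" unfolding ran_eq_img[of \<sigma>] d gW_def[abs_def] by (rule refl)
  have "ran \<sigma> \<subseteq> {1..2*m}" using pi by (simp add: partial_inj_def)
  moreover have "card (ran \<sigma>) = card {1..2*m}" unfolding r by (rule card_image[OF i])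
  ultimately show "ran \<sigma> = {1..2*m}" by (rule card_subset_eq[rotated]) simp
  thus "gW \<sigma> ` {1..2*m} = {1..2*m}" unfolding r .
  fix x assume x: "x \<in> {1..2*m}"
  have e1: "\<sigma> (theta (2*m) x) = Some (gW \<sigma> (theta (2*m) x))" by (rule s[OF theta_in[OF x]])
  have e2: "\<sigma> x = Some (gW \<sigma> x)" by (rule s[OF x])
  have e3: "\<sigma> (theta (2*m) x) = map_option (theta (2*m)) (\<sigma> x)" using c x by blast
  from e3 show "gW \<sigma> (theta (2*m) x) = theta (2*m) (gW \<sigma> x)" unfolding e1 e2 by simp
qed

lemma type_core:
  assumes inj: "inj_on g {1..2*m}" and img: "g ` {1..2*m} \<subseteq> {1..2*m}"
    and com: "\<And>x. x \<in> {1..2*m} \<Longrightarrow> g (theta (2*m) x) = theta (2*m) (g x)"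
    and adm: "adm0 m A" and cA: "card A = m"
  shows "typeI m (g ` A) = (typeI m A = even (card {i\<in>{1..m}. g i > m}))"
proof -
  define t where "t = theta (2*m)"
  define P where "P = {1..(m::nat)}"
  define S where "S = {i\<in>P. g i > m}"
  define B where "B = A \<inter> P"
  have sub: "A \<subseteq> {1..2*m}" using adm by (simp add: adm0_def)
  have tin: "\<And>x. x \<in> {1..2*m} \<Longrightarrow> t x \<in> {1..2*m}" unfolding t_def by (rule theta_in)
  have tt: "\<And>x. x \<in> {1..2*m} \<Longrightarrow> t (t x) = x" unfolding t_def by (rule theta_theta)
  have tgt: "\<And>x. x \<in> {1..2*m} \<Longrightarrow> (t x > m) = (x \<le> m)" unfolding t_def by (rule theta_gt)
  have tinj: "inj_on t {1..2*m}" unfolding t_def by (rule theta_inj)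
  have full: "\<And>x. x \<in> {1..2*m} \<Longrightarrow> (x \<in> A) = (t x \<notin> A)" unfolding t_def
    using adm0_full[OF adm cA] by blast
  have com': "\<And>x. x \<in> {1..2*m} \<Longrightarrow> g (t x) = t (g x)" unfolding t_def by (rule com)
  have gin: "\<And>x. x \<in> {1..2*m} \<Longrightarrow> g x \<in> {1..2*m}" using img by blast
  have PS: "P \<subseteq> {1..2*m}" unfolding P_def by auto
  have fP: "finite P" unfolding P_def by simp
  have e1: "{y \<in> g ` A. y > m} = g ` {a\<in>A. g a > m}" by blast
  have c1: "card {y \<in> g ` A. y > m} = card {a\<in>A. g a > m}"
    unfolding e1 by (rule card_image, rule inj_on_subset[OF inj]) (use sub in blast)
  have e2: "{a\<in>A. g a > m} = (B \<inter> S) \<union> t ` ((P - B) - S)"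
  proof (intro set_eqI iffI)
    fix a assume a: "a \<in> {a\<in>A. g a > m}"
    then have a12: "a \<in> {1..2*m}" using sub by blast
    show "a \<in> (B \<inter> S) \<union> t ` ((P - B) - S)"
    proof (cases "a \<le> m")
      case True
      then have "a \<in> B \<inter> S" using a a12 unfolding B_def S_def P_def by auto
      then show ?thesis by blast
    next
      case False
      have ta: "t a \<in> {1..2*m}" by (rule tin[OF a12])
      have "t a \<le> m" using tgt[OF a12] False by simp
      hence taP: "t a \<in> P" using ta unfolding P_def by auto
      have "t a \<notin> A" using full[OF a12] a by blast
      hence "t a \<notin> B" unfolding B_def by blast
      moreover have "g (t a) \<le> m"
        using com'[OF a12] a tgt[OF gin[OF a12]] tt[OF a12] by (metis (no_types, lifting) com' gin mem_Collect_eq not_le ta tgt)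
      hence "t a \<notin> S" unfolding S_def by simp
      ultimately have "t a \<in> (P - B) - S" using taP by blast
      moreover have "a = t (t a)" using tt[OF a12] by simp
      ultimately show ?thesis by blast
    qed
  next
    fix a assume a: "a \<in> (B \<inter> S) \<union> t ` ((P - B) - S)"
    show "a \<in> {a\<in>A. g a > m}"
    proof (cases "a \<in> B \<inter> S")
      case True then show ?thesis unfolding B_def S_def by blast
    next
      case False
      then obtain i where i: "i \<in> P" "i \<notin> B" "i \<notin> S" "a = t i" using a by blast
      have i12: "i \<in> {1..2*m}" using i(1) PS by blast
      have "i \<notin> A" using i unfolding B_def by blast
      hence "a \<in> A" using full[OF i12] i(4) by blast
      moreover have "g i \<le> m" using i(1,3) unfolding S_def by auto
      hence "g a > m" using i(4) com'[OF i12] tgt[OF gin[OF i12]] by simp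
      ultimately show ?thesis by blast
    qed
  qed
  have fin1: "finite (B \<inter> S)" using fP unfolding B_def by blast
  have fin2: "finite ((P - B) - S)" using fP by blast
  have tPS: "inj_on t ((P - B) - S)" by (rule inj_on_subset[OF tinj]) (use PS in blast)
  have disj1: "(B \<inter> S) \<inter> t ` ((P - B) - S) = {}"
  proof -
    have h: "t x \<notin> P" if "x \<in> P" for x
    proof -
      have "x \<in> {1..2*m}" using that PS by blast
      hence "t x > m" using tgt that unfolding P_def by simp
      thus "t x \<notin> P" unfolding P_def by simp
    qed
    hence "t ` ((P - B) - S) \<inter> P = {}" by blast
    thus ?thesis unfolding B_def by blast
  qed
  have c2: "card {a\<in>A. g a > m} = card (B \<inter> S) + card ((P - B) - S)"
    unfolding e2 using card_Un_disjoint[OF fin1 finite_imageI[OF fin2] disj1] card_image[OF tPS] by simp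
  have e3: "{x\<in>A. x > m} = t ` (P - B)"
  proof (intro set_eqI iffI)
    fix a assume a: "a \<in> {x\<in>A. x > m}"
    then have a12: "a \<in> {1..2*m}" using sub by blast
    have ta: "t a \<in> {1..2*m}" by (rule tin[OF a12])
    have "t a \<le> m" using tgt[OF a12] a by simp
    hence taP: "t a \<in> P" using ta unfolding P_def by auto
    have "t a \<notin> A" using full[OF a12] a by blast
    hence "t a \<in> P - B" using taP unfolding B_def by blast
    moreover have "a = t (t a)" using tt[OF a12] by simp
    ultimately show "a \<in> t ` (P - B)" by blast
  next
    fix a assume "a \<in> t ` (P - B)"
    then obtain i where i: "i \<in> P" "i \<notin> B" "a = t i" by blast
    have i12: "i \<in> {1..2*m}" using i(1) PS by blast
    have "i \<notin> A" using i unfolding B_def by blast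
    hence "a \<in> A" using full[OF i12] i(3) by blast
    moreover have "a > m" using tgt[OF i12] i(1) i(3) unfolding P_def by simp
    ultimately show "a \<in> {x\<in>A. x > m}" by blast
  qed
  have tPB: "inj_on t (P - B)" by (rule inj_on_subset[OF tinj]) (use PS in blast)
  have c3: "card {x\<in>A. x > m} = card (P - B)" unfolding e3 by (rule card_image[OF tPB])
  have c4: "card (P - B) = card ((P - B) \<inter> S) + card ((P - B) - S)"
    using card_Int_Diff[of "P - B" S] fP by simp
  have c5: "card S = card (B \<inter> S) + card ((P - B) \<inter> S)"
  proof -
    have "S = (B \<inter> S) \<union> ((P - B) \<inter> S)" unfolding S_def by blast
    moreover have "card ((B \<inter> S) \<union> ((P - B) \<inter> S)) = card (B \<inter> S) + card ((P - B) \<inter> S)"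
      by (rule card_Un_disjoint) (use fP in \<open>auto simp: B_def\<close>)
    ultimately show ?thesis by simp
  qed
  have "typeI m (g ` A) = even (card (B \<inter> S) + card ((P - B) - S))"
    unfolding typeI_def using c1 c2 by simp
  moreover have "typeI m A = even (card ((P - B) \<inter> S) + card ((P - B) - S))"
    unfolding typeI_def using c3 c4 by simp
  moreover have "even (card {i\<in>{1..m}. g i > m}) = even (card (B \<inter> S) + card ((P - B) \<inter> S))"
    using c5 unfolding S_def P_def by simp
  ultimately show ?thesis by presburger
qed

lemma W_adm_img: assumes "\<sigma> \<in> W (2*m)" "adm0 m A" shows "adm0 m (gW \<sigma> ` A)"
proof -
  note w = W_props[OF assms(1)]
  have sub: "A \<subseteq> {1..2*m}" using assms(2) by (simp add: adm0_def)
  have "gW \<sigma> ` A \<subseteq> {1..2*m}" using sub w(2) by blast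
  moreover have "gW \<sigma> ` A \<inter> theta (2*m) ` gW \<sigma> ` A = {}"
  proof (rule ccontr)
    assume "gW \<sigma> ` A \<inter> theta (2*m) ` gW \<sigma> ` A \<noteq> {}"
    then obtain a b where ab: "a \<in> A" "b \<in> A" "gW \<sigma> a = theta (2*m) (gW \<sigma> b)" by blast
    have b12: "b \<in> {1..2*m}" using ab(2) sub by blast
    have a12: "a \<in> {1..2*m}" using ab(1) sub by blast
    have "gW \<sigma> a = gW \<sigma> (theta (2*m) b)" using ab(3) w(4)[OF b12] by simp
    hence "a = theta (2*m) b" using w(1) a12 theta_in[OF b12] unfolding inj_on_def by blast
    hence "a \<in> A \<inter> theta (2*m) ` A" using ab by blast
    thus False using assms(2) unfolding adm0_def by blast
  qed
  ultimately show ?thesis unfolding adm0_def by blast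
qed

lemma W_pre: assumes "\<sigma> \<in> W (2*m)" "adm0 m D"
  shows "adm0 m {x\<in>{1..2*m}. gW \<sigma> x \<in> D}" "gW \<sigma> ` {x\<in>{1..2*m}. gW \<sigma> x \<in> D} = D"
    "card {x\<in>{1..2*m}. gW \<sigma> x \<in> D} = card D"
proof -
  note w = W_props[OF assms(1)]
  let ?A = "{x\<in>{1..2*m}. gW \<sigma> x \<in> D}"
  have sub: "D \<subseteq> {1..2*m}" using assms(2) by (simp add: adm0_def)
  show eq: "gW \<sigma> ` ?A = D"
  proof (intro set_eqI iffI)
    fix y assume "y \<in> gW \<sigma> ` ?A" thus "y \<in> D" by blast
  next
    fix y assume y: "y \<in> D"
    hence "y \<in> gW \<sigma> ` {1..2*m}" using sub w(2) by blast
    then obtain x where "x \<in> {1..2*m}" "y = gW \<sigma> x" by blast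
    thus "y \<in> gW \<sigma> ` ?A" using y by blast
  qed
  have "?A \<subseteq> {1..2*m}" by blast
  moreover have "?A \<inter> theta (2*m) ` ?A = {}"
  proof (rule ccontr)
    assume "?A \<inter> theta (2*m) ` ?A \<noteq> {}"
    then obtain a where a: "a \<in> ?A" "theta (2*m) a \<in> ?A" by blast
    have a12: "a \<in> {1..2*m}" using a by blast
    have "gW \<sigma> (theta (2*m) a) = theta (2*m) (gW \<sigma> a)" by (rule w(4)[OF a12])
    hence "theta (2*m) (gW \<sigma> a) \<in> D" "gW \<sigma> a \<in> D" using a by auto
    hence "theta (2*m) (gW \<sigma> a) \<in> D \<inter> theta (2*m) ` D" by blast
    thus False using assms(2) unfolding adm0_def by blast
  qed
  ultimately show "adm0 m ?A" unfolding adm0_def by blast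
  have "inj_on (gW \<sigma>) ?A" by (rule inj_on_subset[OF w(1)]) blast
  thus "card ?A = card D" using card_image eq by metis
qed

lemma typeI_P: "typeI m {1..m}"
proof -
  have e: "{x\<in>{1..m}. x > m} = {}" by auto
  show ?thesis unfolding typeI_def e by simp
qed

lemma adm0_P: "adm0 m {1..m}"
  unfolding adm0_def theta_def by auto

lemma W'_iff: "\<sigma> \<in> W' m \<longleftrightarrow> \<sigma> \<in> W (2*m) \<and> typeI m (gW \<sigma> ` {1..m})"
proof (cases "\<sigma> \<in> W (2*m)")
  case True
  note w = W_props[OF True]
  have "{y. \<exists>x\<in>{1..m}. \<sigma> x = Some y} \<inter> {m+1..2*m} = {y \<in> gW \<sigma> ` {1..m}. y > m}"
  proof (intro set_eqI iffI)
    fix y assume "y \<in> {y. \<exists>x\<in>{1..m}. \<sigma> x = Some y} \<inter> {m+1..2*m}"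
    then obtain x where x: "x \<in> {1..m}" "\<sigma> x = Some y" "y > m" by auto
    have "x \<in> {1..2*m}" using x by auto
    hence "y = gW \<sigma> x" using w(3) x(2) by simp
    thus "y \<in> {y \<in> gW \<sigma> ` {1..m}. y > m}" using x by blast
  next
    fix y assume "y \<in> {y \<in> gW \<sigma> ` {1..m}. y > m}"
    then obtain x where x: "x \<in> {1..m}" "y = gW \<sigma> x" "y > m" by blast
    have x12: "x \<in> {1..2*m}" using x by auto
    hence "\<sigma> x = Some y" using w(3) x(2) by simp
    moreover have "y \<in> {1..2*m}" using w(2) x12 x(2) by blast
    ultimately show "y \<in> {y. \<exists>x\<in>{1..m}. \<sigma> x = Some y} \<inter> {m+1..2*m}" using x by auto
  qed
  then show ?thesis using True unfolding W'_def typeI_def by simp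
next
  case False then show ?thesis unfolding W'_def by simp
qed

lemma W_type: assumes "\<sigma> \<in> W (2*m)" "adm0 m A" "card A = m"
  shows "typeI m (gW \<sigma> ` A) = (typeI m A = typeI m (gW \<sigma> ` {1..m}))"
proof -
  note w = W_props[OF assms(1)]
  have "typeI m (gW \<sigma> ` A) = (typeI m A = even (card {i\<in>{1..m}. gW \<sigma> i > m}))"
    by (rule type_core[OF w(1) equalityD1[OF w(2)] w(4) assms(2,3)])
  moreover have "card {y \<in> gW \<sigma> ` {1..m}. y > m} = card {i\<in>{1..m}. gW \<sigma> i > m}"
  proof -
    have "{y \<in> gW \<sigma> ` {1..m}. y > m} = gW \<sigma> ` {i\<in>{1..m}. gW \<sigma> i > m}" by blast
    moreover have "inj_on (gW \<sigma>) {i\<in>{1..m}. gW \<sigma> i > m}" by (rule inj_on_subset[OF w(1)]) auto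
    ultimately show ?thesis by (simp add: card_image)
  qed
  ultimately show ?thesis unfolding typeI_def by simp
qed

lemma W'_type: assumes "\<sigma> \<in> W' m" "adm0 m A" "card A = m"
  shows "typeI m (gW \<sigma> ` A) = typeI m A"
  using W_type[OF _ assms(2,3)] assms(1) unfolding W'_iff by blast

definition small :: "nat \<Rightarrow> (nat \<rightharpoonup> nat) \<Rightarrow> bool" where
  "small m \<sigma> \<longleftrightarrow> adm0 m (dom \<sigma>) \<and> adm0 m (ran \<sigma>) \<and> (rk \<sigma> = m \<longrightarrow> typeI m (dom \<sigma>) = typeI m (ran \<sigma>))"

lemma OR_iff: assumes "m \<ge> 1"
  shows "\<sigma> \<in> OR m \<longleftrightarrow> partial_inj (2*m) \<sigma> \<and> (small m \<sigma> \<or> \<sigma> \<in> W' m)"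
proof
  assume "\<sigma> \<in> OR m"
  then have h: "partial_inj (2*m) \<sigma> \<and>
    ((rk \<sigma> < m \<and> admissible (2*m) (dom \<sigma>) \<and> admissible (2*m) (ran \<sigma>))
    \<or> (rk \<sigma> = m \<and> admissible (2*m) (dom \<sigma>) \<and> admissible (2*m) (ran \<sigma>)
         \<and> typeI m (dom \<sigma>) = typeI m (ran \<sigma>))
    \<or> \<sigma> \<in> W' m)" unfolding OR_def by (rule CollectD)
  have pi: "partial_inj (2*m) \<sigma>" using h by (rule conjunct1)
  have cr: "card (ran \<sigma>) = rk \<sigma>" using pi_card_ran[OF pi] by (simp add: rk_def)
  have cf: "card {1..2*m} = 2*m" by simp
  have "small m \<sigma> \<or> \<sigma> \<in> W' m"
  proof (cases "\<sigma> \<in> W' m")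
    case False
    then have c: "(rk \<sigma> < m \<and> admissible (2*m) (dom \<sigma>) \<and> admissible (2*m) (ran \<sigma>))
    \<or> (rk \<sigma> = m \<and> admissible (2*m) (dom \<sigma>) \<and> admissible (2*m) (ran \<sigma>)
         \<and> typeI m (dom \<sigma>) = typeI m (ran \<sigma>))" using h by blast
    have "rk \<sigma> < m \<or> rk \<sigma> = m" using c by blast
    hence le: "rk \<sigma> \<le> m" by linarith
    have ad: "admissible (2*m) (dom \<sigma>)" "admissible (2*m) (ran \<sigma>)" using c by blast+
    have ty: "rk \<sigma> = m \<longrightarrow> typeI m (dom \<sigma>) = typeI m (ran \<sigma>)"
    proof
      assume "rk \<sigma> = m" hence "\<not> rk \<sigma> < m" by simp
      thus "typeI m (dom \<sigma>) = typeI m (ran \<sigma>)" using c by blast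
    qed
    have "dom \<sigma> \<noteq> {1..2*m}"
    proof
      assume "dom \<sigma> = {1..2*m}" hence "rk \<sigma> = 2*m" unfolding rk_def using cf by simp
      thus False using le assms by simp
    qed
    hence "adm0 m (dom \<sigma>)" using ad(1) \<open>dom \<sigma> \<noteq> {1..2*m}\<close> by (simp add: admissible_iff[OF assms])
    moreover have "ran \<sigma> \<noteq> {1..2*m}"
    proof
      assume "ran \<sigma> = {1..2*m}" hence "rk \<sigma> = 2*m" using cr cf by simp
      thus False using le assms by simp
    qed
    hence "adm0 m (ran \<sigma>)" using ad(2) \<open>ran \<sigma> \<noteq> {1..2*m}\<close> by (simp add: admissible_iff[OF assms])
    ultimately show ?thesis using ty unfolding small_def by blast
  qed simp
  thus "partial_inj (2*m) \<sigma> \<and> (small m \<sigma> \<or> \<sigma> \<in> W' m)" using pi by blast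
next
  assume a: "partial_inj (2*m) \<sigma> \<and> (small m \<sigma> \<or> \<sigma> \<in> W' m)"
  have pi: "partial_inj (2*m) \<sigma>" using a by (rule conjunct1)
  show "\<sigma> \<in> OR m"
  proof (cases "\<sigma> \<in> W' m")
    case True thus ?thesis using pi unfolding OR_def by blast
  next
    case False
    hence s: "small m \<sigma>" using a by blast
    have d0: "adm0 m (dom \<sigma>)" and r0: "adm0 m (ran \<sigma>)"
      and ty: "rk \<sigma> = m \<longrightarrow> typeI m (dom \<sigma>) = typeI m (ran \<sigma>)"
      using s unfolding small_def by blast+
    have "rk \<sigma> \<le> m" unfolding rk_def by (rule adm0_card[OF d0])
    moreover have ad: "admissible (2*m) (dom \<sigma>)" "admissible (2*m) (ran \<sigma>)"
      using d0 r0 by (simp_all add: admissible_iff[OF assms])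
    ultimately have "(rk \<sigma> < m \<and> admissible (2*m) (dom \<sigma>) \<and> admissible (2*m) (ran \<sigma>))
    \<or> (rk \<sigma> = m \<and> admissible (2*m) (dom \<sigma>) \<and> admissible (2*m) (ran \<sigma>)
         \<and> typeI m (dom \<sigma>) = typeI m (ran \<sigma>))" using ty by (auto simp only: le_less)
    thus ?thesis using pi unfolding OR_def by blast
  qed
qed

lemma W'_W: "\<sigma> \<in> W' m \<Longrightarrow> \<sigma> \<in> W (2*m)" unfolding W'_def by simp

lemma W'_pi: "\<sigma> \<in> W' m \<Longrightarrow> partial_inj (2*m) \<sigma>" unfolding W'_def W_def by simp

lemma comp_small_small: assumes "partial_inj (2*m) \<sigma>" "partial_inj (2*m) \<tau>" "small m \<sigma>" "small m \<tau>"
  shows "small m (\<sigma> \<circ>\<^sub>m \<tau>)"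
proof -
  have ds: "adm0 m (dom \<sigma>)" "adm0 m (ran \<sigma>)" "rk \<sigma> = m \<longrightarrow> typeI m (dom \<sigma>) = typeI m (ran \<sigma>)"
    using assms(3) unfolding small_def by simp_all
  have dt: "adm0 m (dom \<tau>)" "adm0 m (ran \<tau>)" "rk \<tau> = m \<longrightarrow> typeI m (dom \<tau>) = typeI m (ran \<tau>)"
    using assms(4) unfolding small_def by simp_all
  have pc: "partial_inj (2*m) (\<sigma> \<circ>\<^sub>m \<tau>)" by (rule pi_comp[OF assms(1,2)])
  have sd: "dom (\<sigma> \<circ>\<^sub>m \<tau>) \<subseteq> dom \<tau>" unfolding dom_comp by auto
  have sr: "ran (\<sigma> \<circ>\<^sub>m \<tau>) \<subseteq> ran \<sigma>" by (rule ran_comp_sub)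
  have a1: "adm0 m (dom (\<sigma> \<circ>\<^sub>m \<tau>))" by (rule adm0_subset[OF dt(1) sd])
  have a2: "adm0 m (ran (\<sigma> \<circ>\<^sub>m \<tau>))" by (rule adm0_subset[OF ds(2) sr])
  have a3: "typeI m (dom (\<sigma> \<circ>\<^sub>m \<tau>)) = typeI m (ran (\<sigma> \<circ>\<^sub>m \<tau>))" if r: "rk (\<sigma> \<circ>\<^sub>m \<tau>) = m"
  proof -
    have fdt: "finite (dom \<tau>)" "finite (ran \<tau>)" using pi_finite[OF assms(2)] by simp_all
    have fds: "finite (dom \<sigma>)" "finite (ran \<sigma>)" using pi_finite[OF assms(1)] by simp_all
    have "card (dom (\<sigma> \<circ>\<^sub>m \<tau>)) = m" using r by (simp add: rk_def)
    moreover have "card (dom \<tau>) \<le> m" by (rule adm0_card[OF dt(1)])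
    moreover have "card (dom (\<sigma> \<circ>\<^sub>m \<tau>)) \<le> card (dom \<tau>)" by (rule card_mono[OF fdt(1) sd])
    ultimately have cdt: "card (dom \<tau>) = m" by linarith
    have e1: "dom (\<sigma> \<circ>\<^sub>m \<tau>) = dom \<tau>"
      by (rule card_subset_eq[OF fdt(1) sd]) (simp add: cdt \<open>card (dom (\<sigma> \<circ>\<^sub>m \<tau>)) = m\<close>)
    have t1: "typeI m (dom \<tau>) = typeI m (ran \<tau>)" using dt(3) cdt by (simp add: rk_def)
    have rts: "ran \<tau> \<subseteq> dom \<sigma>"
    proof
      fix y assume "y \<in> ran \<tau>"
      then obtain x where x: "\<tau> x = Some y" unfolding ran_def by blast
      hence "x \<in> dom (\<sigma> \<circ>\<^sub>m \<tau>)" using e1 by auto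
      thus "y \<in> dom \<sigma>" unfolding dom_comp using x by simp
    qed
    have "card (ran \<tau>) = m" using pi_card_ran[OF assms(2)] cdt by simp
    moreover have "card (dom \<sigma>) \<le> m" by (rule adm0_card[OF ds(1)])
    moreover have "card (ran \<tau>) \<le> card (dom \<sigma>)" by (rule card_mono[OF fds(1) rts])
    ultimately have cds: "card (dom \<sigma>) = m" by linarith
    have e2: "ran \<tau> = dom \<sigma>"
      by (rule card_subset_eq[OF fds(1) rts]) (simp add: cds \<open>card (ran \<tau>) = m\<close>)
    have t2: "typeI m (dom \<sigma>) = typeI m (ran \<sigma>)" using ds(3) cds by (simp add: rk_def)
    have "card (ran (\<sigma> \<circ>\<^sub>m \<tau>)) = m" using pi_card_ran[OF pc] r by (simp add: rk_def)
    moreover have "card (ran \<sigma>) \<le> m" by (rule adm0_card[OF ds(2)])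
    ultimately have e3: "ran (\<sigma> \<circ>\<^sub>m \<tau>) = ran \<sigma>"
      using card_mono[OF fds(2) sr] by (intro card_subset_eq[OF fds(2) sr]) linarith
    show ?thesis using e1 e2 e3 t1 t2 by simp
  qed
  show ?thesis unfolding small_def using a1 a2 a3 by blast
qed

lemma comp_W_small: assumes "\<sigma> \<in> W' m" "partial_inj (2*m) \<tau>" "small m \<tau>"
  shows "small m (\<sigma> \<circ>\<^sub>m \<tau>)"
proof -
  have sW: "\<sigma> \<in> W (2*m)" by (rule W'_W[OF assms(1)])
  note w = W_props[OF sW]
  have dt: "adm0 m (dom \<tau>)" "adm0 m (ran \<tau>)" "rk \<tau> = m \<longrightarrow> typeI m (dom \<tau>) = typeI m (ran \<tau>)"
    using assms(3) unfolding small_def by simp_all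
  have rt: "ran \<tau> \<subseteq> {1..2*m}" using assms(2) by (simp add: partial_inj_def)
  have e1: "dom (\<sigma> \<circ>\<^sub>m \<tau>) = dom \<tau>"
  proof -
    have "\<And>x. x \<in> dom \<tau> \<Longrightarrow> the (\<tau> x) \<in> ran \<tau>" by (auto simp: ran_def)
    hence "\<And>x. x \<in> dom \<tau> \<Longrightarrow> the (\<tau> x) \<in> {1..2*m}" using rt by (meson subsetD)
    hence "\<And>x. x \<in> dom \<tau> \<Longrightarrow> the (\<tau> x) \<in> dom \<sigma>" unfolding w(6) .
    thus ?thesis unfolding dom_comp by auto
  qed
  have e2: "ran (\<sigma> \<circ>\<^sub>m \<tau>) = gW \<sigma> ` ran \<tau>"
  proof -
    have "ran \<tau> \<inter> dom \<sigma> = ran \<tau>" using rt w(6) by auto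
    thus ?thesis unfolding ran_comp gW_def[abs_def] by simp
  qed
  have a2: "adm0 m (ran (\<sigma> \<circ>\<^sub>m \<tau>))" unfolding e2 by (rule W_adm_img[OF sW dt(2)])
  have a3: "typeI m (dom (\<sigma> \<circ>\<^sub>m \<tau>)) = typeI m (ran (\<sigma> \<circ>\<^sub>m \<tau>))" if r: "rk (\<sigma> \<circ>\<^sub>m \<tau>) = m"
  proof -
    have "card (dom \<tau>) = m" using r e1 by (simp add: rk_def)
    hence cr: "card (ran \<tau>) = m" using pi_card_ran[OF assms(2)] by simp
    have "typeI m (gW \<sigma> ` ran \<tau>) = typeI m (ran \<tau>)" by (rule W'_type[OF assms(1) dt(2) cr])
    thus ?thesis using dt(3) \<open>card (dom \<tau>) = m\<close> e1 e2 by (simp add: rk_def)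
  qed
  show ?thesis unfolding small_def using a2 a3 e1 dt(1) by simp
qed

lemma comp_small_W: assumes "partial_inj (2*m) \<sigma>" "small m \<sigma>" "\<tau> \<in> W' m"
  shows "small m (\<sigma> \<circ>\<^sub>m \<tau>)"
proof -
  have tW: "\<tau> \<in> W (2*m)" by (rule W'_W[OF assms(3)])
  note w = W_props[OF tW]
  have ds: "adm0 m (dom \<sigma>)" "adm0 m (ran \<sigma>)" "rk \<sigma> = m \<longrightarrow> typeI m (dom \<sigma>) = typeI m (ran \<sigma>)"
    using assms(2) unfolding small_def by simp_all
  have dsub: "dom \<sigma> \<subseteq> {1..2*m}" using assms(1) by (simp add: partial_inj_def)
  have e1: "dom (\<sigma> \<circ>\<^sub>m \<tau>) = {x\<in>{1..2*m}. gW \<tau> x \<in> dom \<sigma>}"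
    unfolding dom_comp w(6) gW_def by (rule refl)
  have e2: "ran (\<sigma> \<circ>\<^sub>m \<tau>) = ran \<sigma>"
  proof -
    have "ran \<tau> \<inter> dom \<sigma> = dom \<sigma>" using dsub w(5) by auto
    thus ?thesis unfolding ran_comp ran_eq_img[of \<sigma>] by simp
  qed
  note pre = W_pre[OF tW ds(1)]
  have a1: "adm0 m (dom (\<sigma> \<circ>\<^sub>m \<tau>))" unfolding e1 by (rule pre(1))
  have a3: "typeI m (dom (\<sigma> \<circ>\<^sub>m \<tau>)) = typeI m (ran (\<sigma> \<circ>\<^sub>m \<tau>))" if r: "rk (\<sigma> \<circ>\<^sub>m \<tau>) = m"
  proof -
    have c: "card {x\<in>{1..2*m}. gW \<tau> x \<in> dom \<sigma>} = m" using r e1 by (simp add: rk_def)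
    hence cs: "card (dom \<sigma>) = m" using pre(3) by simp
    have "typeI m (gW \<tau> ` {x\<in>{1..2*m}. gW \<tau> x \<in> dom \<sigma>}) = typeI m {x\<in>{1..2*m}. gW \<tau> x \<in> dom \<sigma>}"
      by (rule W'_type[OF assms(3) pre(1) c])
    hence "typeI m (dom \<sigma>) = typeI m (dom (\<sigma> \<circ>\<^sub>m \<tau>))" unfolding pre(2) e1 .
    thus ?thesis using ds(3) cs e2 by (simp add: rk_def)
  qed
  show ?thesis unfolding small_def using a1 a3 e2 ds(2) by simp
qed

lemma comp_W_W: assumes "\<sigma> \<in> W' m" "\<tau> \<in> W' m"
  shows "\<sigma> \<circ>\<^sub>m \<tau> \<in> W' m"
proof -
  have sW: "\<sigma> \<in> W (2*m)" by (rule W'_W[OF assms(1)])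
  have tW: "\<tau> \<in> W (2*m)" by (rule W'_W[OF assms(2)])
  note ws = W_props[OF sW] and wt = W_props[OF tW]
  have gin: "gW \<tau> x \<in> {1..2*m}" if "x \<in> {1..2*m}" for x using wt(2) that by blast
  have ev: "(\<sigma> \<circ>\<^sub>m \<tau>) x = Some (gW \<sigma> (gW \<tau> x))" if x: "x \<in> {1..2*m}" for x
  proof -
    have "(\<sigma> \<circ>\<^sub>m \<tau>) x = \<sigma> (gW \<tau> x)" using wt(3)[OF x] by simp
    also have "\<dots> = Some (gW \<sigma> (gW \<tau> x))" by (rule ws(3)[OF gin[OF x]])
    finally show ?thesis .
  qed
  have pc: "partial_inj (2*m) (\<sigma> \<circ>\<^sub>m \<tau>)" by (rule pi_comp[OF W'_pi[OF assms(1)] W'_pi[OF assms(2)]])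
  have dc: "dom (\<sigma> \<circ>\<^sub>m \<tau>) = {1..2*m}"
  proof (intro equalityI subsetI)
    fix x assume "x \<in> dom (\<sigma> \<circ>\<^sub>m \<tau>)" thus "x \<in> {1..2*m}" unfolding dom_comp wt(6) by simp
  next
    fix x assume "x \<in> {1..2*m}" thus "x \<in> dom (\<sigma> \<circ>\<^sub>m \<tau>)" using ev by auto
  qed
  have cm: "(\<sigma> \<circ>\<^sub>m \<tau>) (theta (2*m) i) = map_option (theta (2*m)) ((\<sigma> \<circ>\<^sub>m \<tau>) i)" if i: "i \<in> {1..2*m}" for i
  proof -
    have "(\<sigma> \<circ>\<^sub>m \<tau>) (theta (2*m) i) = Some (gW \<sigma> (gW \<tau> (theta (2*m) i)))" by (rule ev[OF theta_in[OF i]])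
    also have "gW \<tau> (theta (2*m) i) = theta (2*m) (gW \<tau> i)" by (rule wt(4)[OF i])
    also have "gW \<sigma> (theta (2*m) (gW \<tau> i)) = theta (2*m) (gW \<sigma> (gW \<tau> i))" by (rule ws(4)[OF gin[OF i]])
    finally show ?thesis using ev[OF i] by simp
  qed
  have cW: "\<sigma> \<circ>\<^sub>m \<tau> \<in> W (2*m)" unfolding W_def using pc dc cm by blast
  have gc: "gW (\<sigma> \<circ>\<^sub>m \<tau>) ` {1..m} = gW \<sigma> ` (gW \<tau> ` {1..m})"
  proof -
    have "gW (\<sigma> \<circ>\<^sub>m \<tau>) x = gW \<sigma> (gW \<tau> x)" if "x \<in> {1..m}" for x
      using ev[of x] that unfolding gW_def by simp
    thus ?thesis by (auto simp: image_image intro: image_cong)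
  qed
  have tP: "typeI m (gW \<tau> ` {1..m})" using assms(2) unfolding W'_iff by blast
  have aP: "adm0 m (gW \<tau> ` {1..m})" by (rule W_adm_img[OF tW adm0_P])
  have cP: "card (gW \<tau> ` {1..m}) = m"
    by (subst card_image) (rule inj_on_subset[OF wt(1)], auto)
  have "typeI m (gW \<sigma> ` (gW \<tau> ` {1..m}))" using W'_type[OF assms(1) aP cP] tP by simp
  thus ?thesis unfolding W'_iff using cW gc by simp
qed

lemma OR_comp: assumes "m \<ge> 1" "\<sigma> \<in> OR m" "\<tau> \<in> OR m" shows "\<sigma> \<circ>\<^sub>m \<tau> \<in> OR m"
proof -
  have s: "partial_inj (2*m) \<sigma>" "small m \<sigma> \<or> \<sigma> \<in> W' m" using assms(2) OR_iff[OF assms(1)] by simp_all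
  have t: "partial_inj (2*m) \<tau>" "small m \<tau> \<or> \<tau> \<in> W' m" using assms(3) OR_iff[OF assms(1)] by simp_all
  have pc: "partial_inj (2*m) (\<sigma> \<circ>\<^sub>m \<tau>)" by (rule pi_comp[OF s(1) t(1)])
  have "small m (\<sigma> \<circ>\<^sub>m \<tau>) \<or> \<sigma> \<circ>\<^sub>m \<tau> \<in> W' m"
    using s(2) t(2) comp_small_small[OF s(1) t(1)] comp_W_small[OF _ t(1)] comp_small_W[OF s(1)]
      comp_W_W by blast
  thus ?thesis using OR_iff[OF assms(1)] pc by simp
qed

lemma mc_assoc: "(f \<circ>\<^sub>m g) \<circ>\<^sub>m h = f \<circ>\<^sub>m (g \<circ>\<^sub>m h)"
  by (rule ext) (simp add: map_comp_def split: option.splits)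

definition idm :: "nat set \<Rightarrow> (nat \<rightharpoonup> nat)" where
  "idm A x = (if x \<in> A then Some x else None)"

lemma comp_idm_r: assumes "dom \<tau> \<subseteq> A" shows "\<tau> \<circ>\<^sub>m idm A = \<tau>"
proof (rule ext)
  fix x show "(\<tau> \<circ>\<^sub>m idm A) x = \<tau> x"
  proof (cases "x \<in> A")
    case True thus ?thesis by (simp add: idm_def)
  next
    case False
    hence "x \<notin> dom \<tau>" using assms by blast
    thus ?thesis using False by (simp add: idm_def domIff)
  qed
qed

lemma comp_idm_l: "ran \<tau> \<subseteq> A \<Longrightarrow> idm A \<circ>\<^sub>m \<tau> = \<tau>"
proof (rule ext)
  fix x assume r: "ran \<tau> \<subseteq> A"
  show "(idm A \<circ>\<^sub>m \<tau>) x = \<tau> x"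
  proof (cases "\<tau> x")
    case None thus ?thesis by simp
  next
    case (Some y)
    hence "y \<in> A" using r by (auto simp: ran_def)
    thus ?thesis using Some by (simp add: idm_def)
  qed
qed

definition minv :: "(nat \<rightharpoonup> nat) \<Rightarrow> (nat \<rightharpoonup> nat)" where
  "minv \<sigma> y = (if y \<in> ran \<sigma> then Some (SOME x. \<sigma> x = Some y) else None)"

lemma minv_some: assumes "partial_inj n \<sigma>" "\<sigma> x = Some y" shows "minv \<sigma> y = Some x"
proof -
  have yr: "y \<in> ran \<sigma>" using assms(2) by (auto simp: ran_def)
  have "\<sigma> (SOME x. \<sigma> x = Some y) = Some y" using someI[of "\<lambda>x. \<sigma> x = Some y"] assms(2) by blast
  moreover have "inj_on \<sigma> (dom \<sigma>)" using assms(1) by (simp add: partial_inj_def)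
  ultimately have "(SOME x. \<sigma> x = Some y) = x" using assms(2) unfolding inj_on_def by (metis domI)
  thus ?thesis using yr by (simp add: minv_def)
qed

lemma minv_some_iff: assumes "partial_inj n \<sigma>" shows "minv \<sigma> y = Some x \<longleftrightarrow> \<sigma> x = Some y"
proof
  assume a: "minv \<sigma> y = Some x"
  hence "y \<in> ran \<sigma>" by (auto simp: minv_def split: if_splits)
  then obtain x' where x': "\<sigma> x' = Some y" by (auto simp: ran_def)
  hence "minv \<sigma> y = Some x'" by (rule minv_some[OF assms])
  thus "\<sigma> x = Some y" using a x' by simp
next
  assume "\<sigma> x = Some y" thus "minv \<sigma> y = Some x" by (rule minv_some[OF assms])
qed

lemma dom_minv: "dom (minv \<sigma>) = ran \<sigma>" by (auto simp: minv_def dom_def split: if_splits)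

lemma ran_minv: assumes "partial_inj n \<sigma>" shows "ran (minv \<sigma>) = dom \<sigma>"
proof (intro set_eqI iffI)
  fix x assume "x \<in> ran (minv \<sigma>)"
  then obtain y where "minv \<sigma> y = Some x" by (auto simp: ran_def)
  thus "x \<in> dom \<sigma>" using minv_some_iff[OF assms] by auto
next
  fix x assume "x \<in> dom \<sigma>"
  then obtain y where "\<sigma> x = Some y" by auto
  thus "x \<in> ran (minv \<sigma>)" using minv_some_iff[OF assms] by (auto simp: ran_def)
qed

lemma pi_minv: assumes "partial_inj n \<sigma>" shows "partial_inj n (minv \<sigma>)"
proof -
  have "inj_on (minv \<sigma>) (dom (minv \<sigma>))"
  proof (rule inj_onI)
    fix x y assume "x \<in> dom (minv \<sigma>)" "y \<in> dom (minv \<sigma>)" "minv \<sigma> x = minv \<sigma> y"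
    then obtain z where "minv \<sigma> x = Some z" "minv \<sigma> y = Some z" by auto
    hence "\<sigma> z = Some x" "\<sigma> z = Some y" using minv_some_iff[OF assms] by auto
    thus "x = y" by simp
  qed
  thus ?thesis using assms unfolding partial_inj_def dom_minv ran_minv[OF assms] by simp
qed

lemma minv_comp: assumes "partial_inj n \<sigma>" shows "minv \<sigma> \<circ>\<^sub>m \<sigma> = idm (dom \<sigma>)"
proof (rule ext)
  fix x show "(minv \<sigma> \<circ>\<^sub>m \<sigma>) x = idm (dom \<sigma>) x"
  proof (cases "\<sigma> x")
    case None thus ?thesis by (simp add: idm_def domIff)
  next
    case (Some y) thus ?thesis using minv_some[OF assms Some] by (simp add: idm_def domIff)
  qed
qed

lemma comp_minv: assumes "partial_inj n \<sigma>" shows "\<sigma> \<circ>\<^sub>m minv \<sigma> = idm (ran \<sigma>)"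
proof (rule ext)
  fix y show "(\<sigma> \<circ>\<^sub>m minv \<sigma>) y = idm (ran \<sigma>) y"
  proof (cases "minv \<sigma> y")
    case None thus ?thesis by (simp add: idm_def minv_def split: if_splits)
  next
    case (Some x)
    hence "\<sigma> x = Some y" using minv_some_iff[OF assms] by simp
    moreover hence "y \<in> ran \<sigma>" by (auto simp: ran_def)
    ultimately show ?thesis using Some by (simp add: idm_def)
  qed
qed

lemma rk_W': assumes "\<sigma> \<in> W' m" shows "rk \<sigma> = 2*m"
  using W_props(6)[OF W'_W[OF assms]] by (simp add: rk_def)

lemma OR_minv: assumes "m \<ge> 1" "\<sigma> \<in> OR m" shows "minv \<sigma> \<in> OR m"
proof -
  have s: "partial_inj (2*m) \<sigma>" "small m \<sigma> \<or> \<sigma> \<in> W' m" using assms(2) OR_iff[OF assms(1)] by simp_all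
  have pm: "partial_inj (2*m) (minv \<sigma>)" by (rule pi_minv[OF s(1)])
  have "small m (minv \<sigma>) \<or> minv \<sigma> \<in> W' m"
  proof (cases "small m \<sigma>")
    case True
    have "rk (minv \<sigma>) = rk \<sigma>" unfolding rk_def dom_minv using pi_card_ran[OF s(1)] .
    hence "small m (minv \<sigma>)" using True unfolding small_def dom_minv ran_minv[OF s(1)] by auto
    thus ?thesis by simp
  next
    case False
    hence sW': "\<sigma> \<in> W' m" using s(2) by simp
    have sW: "\<sigma> \<in> W (2*m)" by (rule W'_W[OF sW'])
    note w = W_props[OF sW]
    have dm: "dom (minv \<sigma>) = {1..2*m}" unfolding dom_minv by (rule w(5))
    have cm: "minv \<sigma> (theta (2*m) y) = map_option (theta (2*m)) (minv \<sigma> y)" if y: "y \<in> {1..2*m}" for y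
    proof -
      obtain x where x: "x \<in> {1..2*m}" "y = gW \<sigma> x" using y w(2) by blast
      have sx: "\<sigma> x = Some y" using w(3)[OF x(1)] x(2) by simp
      have "\<sigma> (theta (2*m) x) = Some (gW \<sigma> (theta (2*m) x))" by (rule w(3)[OF theta_in[OF x(1)]])
      also have "gW \<sigma> (theta (2*m) x) = theta (2*m) y" using w(4)[OF x(1)] x(2) by simp
      finally have "minv \<sigma> (theta (2*m) y) = Some (theta (2*m) x)" by (rule minv_some[OF s(1)])
      thus ?thesis using minv_some[OF s(1) sx] by simp
    qed
    have mW: "minv \<sigma> \<in> W (2*m)" unfolding W_def using pm dm cm by blast
    note wm = W_props[OF mW]
    let ?A = "gW (minv \<sigma>) ` {1..m}"
    have aA: "adm0 m ?A" by (rule W_adm_img[OF mW adm0_P])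
    have cA: "card ?A = m" by (subst card_image) (rule inj_on_subset[OF wm(1)], auto)
    have bk: "gW \<sigma> (gW (minv \<sigma>) y) = y" if y: "y \<in> {1..2*m}" for y
    proof -
      have "minv \<sigma> y = Some (gW (minv \<sigma>) y)" by (rule wm(3)[OF y])
      hence "\<sigma> (gW (minv \<sigma>) y) = Some y" using minv_some_iff[OF s(1)] by simp
      thus ?thesis by (simp add: gW_def)
    qed
    have "gW \<sigma> ` ?A = {1..m}"
    proof -
      have "gW \<sigma> ` ?A = (\<lambda>y. gW \<sigma> (gW (minv \<sigma>) y)) ` {1..m}" by (simp add: image_image)
      also have "\<dots> = (\<lambda>y. y) ` {1..m}" by (rule image_cong) (auto intro: bk)
      finally show ?thesis by simp
    qed
    hence "typeI m ?A" using W'_type[OF sW' aA cA] typeI_P by simp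
    hence "minv \<sigma> \<in> W' m" unfolding W'_iff using mW by simp
    thus ?thesis by simp
  qed
  thus ?thesis using OR_iff[OF assms(1)] pm by simp
qed

lemma chain_small: assumes "partial_inj (2*m) \<sigma>" "partial_inj (2*m) \<tau>" "adm0 m (dom \<sigma>)" "adm0 m (dom \<tau>)"
    "rk (\<sigma> \<circ>\<^sub>m \<tau>) = m"
  shows "dom (\<sigma> \<circ>\<^sub>m \<tau>) = dom \<tau>" "ran \<tau> = dom \<sigma>" "card (dom \<tau>) = m" "card (dom \<sigma>) = m"
proof -
  have fdt: "finite (dom \<tau>)" "finite (ran \<tau>)" using pi_finite[OF assms(2)] by simp_all
  have fds: "finite (dom \<sigma>)" "finite (ran \<sigma>)" using pi_finite[OF assms(1)] by simp_all
  have sd: "dom (\<sigma> \<circ>\<^sub>m \<tau>) \<subseteq> dom \<tau>" unfolding dom_comp by auto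
  have cc: "card (dom (\<sigma> \<circ>\<^sub>m \<tau>)) = m" using assms(5) by (simp add: rk_def)
  moreover have "card (dom \<tau>) \<le> m" by (rule adm0_card[OF assms(4)])
  moreover have "card (dom (\<sigma> \<circ>\<^sub>m \<tau>)) \<le> card (dom \<tau>)" by (rule card_mono[OF fdt(1) sd])
  ultimately show cdt: "card (dom \<tau>) = m" by linarith
  show e1: "dom (\<sigma> \<circ>\<^sub>m \<tau>) = dom \<tau>"
    by (rule card_subset_eq[OF fdt(1) sd]) (simp add: cdt cc)
  have rts: "ran \<tau> \<subseteq> dom \<sigma>"
  proof
    fix y assume "y \<in> ran \<tau>"
    then obtain x where x: "\<tau> x = Some y" unfolding ran_def by blast
    hence "x \<in> dom (\<sigma> \<circ>\<^sub>m \<tau>)" using e1 by auto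
    thus "y \<in> dom \<sigma>" unfolding dom_comp using x by simp
  qed
  have crt: "card (ran \<tau>) = m" using pi_card_ran[OF assms(2)] cdt by simp
  moreover have "card (dom \<sigma>) \<le> m" by (rule adm0_card[OF assms(3)])
  moreover have "card (ran \<tau>) \<le> card (dom \<sigma>)" by (rule card_mono[OF fds(1) rts])
  ultimately show cds: "card (dom \<sigma>) = m" by linarith
  show "ran \<tau> = dom \<sigma>"
    by (rule card_subset_eq[OF fds(1) rts]) (simp add: cds crt)
qed

lemma L_dom: assumes "m \<ge> 1" "Y \<in> OR m" "rk Y = m" "\<rho> \<in> OR m" "rk (Y \<circ>\<^sub>m \<rho>) = m"
  shows "typeI m (dom (Y \<circ>\<^sub>m \<rho>)) = typeI m (dom Y)"
proof -
  have y: "partial_inj (2*m) Y" "small m Y \<or> Y \<in> W' m" using assms(2) OR_iff[OF assms(1)] by simp_all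
  have r: "partial_inj (2*m) \<rho>" "small m \<rho> \<or> \<rho> \<in> W' m" using assms(4) OR_iff[OF assms(1)] by simp_all
  have "Y \<notin> W' m" using rk_W'[of Y m] assms(1,3) by auto
  hence ys: "small m Y" using y(2) by simp
  hence yd: "adm0 m (dom Y)" unfolding small_def by simp
  show ?thesis
  proof (cases "small m \<rho>")
    case True
    have rs: "adm0 m (dom \<rho>)" "adm0 m (ran \<rho>)" "rk \<rho> = m \<longrightarrow> typeI m (dom \<rho>) = typeI m (ran \<rho>)"
      using True unfolding small_def by simp_all
    note ch = chain_small[OF y(1) r(1) yd rs(1) assms(5)]
    show ?thesis using ch rs(3) by (simp add: rk_def)
  next
    case False
    hence rW': "\<rho> \<in> W' m" using r(2) by simp
    have tW: "\<rho> \<in> W (2*m)" by (rule W'_W[OF rW'])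
    note w = W_props[OF tW]
    have e1: "dom (Y \<circ>\<^sub>m \<rho>) = {x\<in>{1..2*m}. gW \<rho> x \<in> dom Y}"
      unfolding dom_comp w(6) gW_def by (rule refl)
    note pre = W_pre[OF tW yd]
    have c: "card {x\<in>{1..2*m}. gW \<rho> x \<in> dom Y} = m" using assms(5) e1 by (simp add: rk_def)
    have "typeI m (gW \<rho> ` {x\<in>{1..2*m}. gW \<rho> x \<in> dom Y}) = typeI m {x\<in>{1..2*m}. gW \<rho> x \<in> dom Y}"
      by (rule W'_type[OF rW' pre(1) c])
    thus ?thesis unfolding pre(2) e1 by simp
  qed
qed

lemma construct: assumes "m \<ge> 1" "\<sigma> \<in> OR m" "\<tau> \<in> OR m" "small m \<tau>" "C \<subseteq> dom \<sigma>" "card C = rk \<tau>"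
    "adm0 m C" "rk \<tau> = m \<longrightarrow> typeI m (dom \<tau>) = typeI m C"
  shows "\<exists>\<rho> \<rho>'. \<tau> = \<rho> \<circ>\<^sub>m \<sigma> \<circ>\<^sub>m \<rho>' \<and> \<rho> \<in> OR m \<and> \<rho>' \<in> OR m"
proof -
  have ps: "partial_inj (2*m) \<sigma>" using assms(2) OR_iff[OF assms(1)] by simp
  have pt: "partial_inj (2*m) \<tau>" using assms(3) OR_iff[OF assms(1)] by simp
  have fC: "finite C" using assms(5) pi_finite[OF ps] finite_subset by blast
  have fT: "finite (dom \<tau>)" using pi_finite[OF pt] by simp
  obtain h where h: "bij_betw h (dom \<tau>) C"
    using finite_same_card_bij[OF fT fC] assms(6) unfolding rk_def by auto
  define \<rho>' where "\<rho>' = (\<lambda>x. if x \<in> dom \<tau> then Some (h x) else None)"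
  have d': "dom \<rho>' = dom \<tau>" unfolding \<rho>'_def dom_def by simp
  have r': "ran \<rho>' = C"
  proof -
    have "ran \<rho>' = h ` dom \<tau>" unfolding \<rho>'_def ran_def by (auto split: if_splits)
    thus ?thesis using h by (simp add: bij_betw_def)
  qed
  have sC: "C \<subseteq> {1..2*m}" using assms(5) ps unfolding partial_inj_def by auto
  have pi': "partial_inj (2*m) \<rho>'"
  proof -
    have "inj_on \<rho>' (dom \<rho>')"
    proof (rule inj_onI)
      fix x y assume xy: "x \<in> dom \<rho>'" "y \<in> dom \<rho>'" "\<rho>' x = \<rho>' y"
      hence xy': "x \<in> dom \<tau>" "y \<in> dom \<tau>" using d' by auto
      hence "h x = h y" using xy(3) unfolding \<rho>'_def by simp
      thus "x = y" using h xy' unfolding bij_betw_def inj_on_def by blast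
    qed
    moreover have "dom \<tau> \<subseteq> {1..2*m}" using pt by (simp add: partial_inj_def)
    ultimately show ?thesis unfolding partial_inj_def d' r' using sC by simp
  qed
  have ts: "adm0 m (dom \<tau>)" using assms(4) unfolding small_def by simp
  have "small m \<rho>'" unfolding small_def d' r' rk_def using ts assms(7,8) by (simp add: rk_def)
  hence o': "\<rho>' \<in> OR m" using OR_iff[OF assms(1)] pi' by simp
  define X where "X = \<sigma> \<circ>\<^sub>m \<rho>'"
  have oX: "X \<in> OR m" unfolding X_def by (rule OR_comp[OF assms(1,2) o'])
  have pX: "partial_inj (2*m) X" using oX OR_iff[OF assms(1)] by simp
  have dX: "dom X = dom \<tau>"
  proof -
    have "\<And>x. x \<in> dom \<tau> \<Longrightarrow> the (\<rho>' x) \<in> dom \<sigma>"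
    proof -
      fix x assume x: "x \<in> dom \<tau>"
      hence "h x \<in> C" using h by (auto simp: bij_betw_def)
      thus "the (\<rho>' x) \<in> dom \<sigma>" using x assms(5) unfolding \<rho>'_def by auto
    qed
    thus ?thesis unfolding X_def dom_comp d' by auto
  qed
  define \<rho> where "\<rho> = \<tau> \<circ>\<^sub>m minv X"
  have o: "\<rho> \<in> OR m" unfolding \<rho>_def by (rule OR_comp[OF assms(1,3) OR_minv[OF assms(1) oX]])
  have "\<rho> \<circ>\<^sub>m \<sigma> \<circ>\<^sub>m \<rho>' = \<tau> \<circ>\<^sub>m (minv X \<circ>\<^sub>m X)"
    unfolding \<rho>_def X_def by (simp only: mc_assoc)
  also have "\<dots> = \<tau>" unfolding minv_comp[OF pX] dX by (rule comp_idm_r) simp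
  finally show ?thesis using o o' by metis
qed

theorem proposition3p1:
  fixes m :: nat and \<sigma> :: "nat \<rightharpoonup> nat"
  assumes "m \<ge> 1" and "\<sigma> \<in> OR m"
  shows "{\<sigma> \<circ>\<^sub>m \<rho> | \<rho>. \<rho> \<in> OR m} = {\<tau> \<in> OR m. ran \<tau> \<subseteq> ran \<sigma>}
    \<and> {\<rho> \<circ>\<^sub>m \<sigma> | \<rho>. \<rho> \<in> OR m} = {\<tau> \<in> OR m. dom \<tau> \<subseteq> dom \<sigma>}
    \<and> (rk \<sigma> \<noteq> m \<longrightarrow>
           {\<rho> \<circ>\<^sub>m \<sigma> \<circ>\<^sub>m \<rho>' | \<rho> \<rho>'. \<rho> \<in> OR m \<and> \<rho>' \<in> OR m}
             = {\<tau> \<in> OR m. rk \<tau> \<le> rk \<sigma>})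
    \<and> (rk \<sigma> = m \<longrightarrow>
           {\<rho> \<circ>\<^sub>m \<sigma> \<circ>\<^sub>m \<rho>' | \<rho> \<rho>'. \<rho> \<in> OR m \<and> \<rho>' \<in> OR m}
             = {\<tau> \<in> OR m. rk \<tau> < m \<or> (rk \<tau> = m \<and> tp m \<tau> = tp m \<sigma>)})"
proof -
  note m1 = assms(1) and oS = assms(2)
  have ps: "partial_inj (2*m) \<sigma>" and sS: "small m \<sigma> \<or> \<sigma> \<in> W' m" using oS OR_iff[OF m1] by simp_all
  have piOR: "\<And>x. x \<in> OR m \<Longrightarrow> partial_inj (2*m) x" using OR_iff[OF m1] by simp
  have P1: "{\<sigma> \<circ>\<^sub>m \<rho> | \<rho>. \<rho> \<in> OR m} = {\<tau> \<in> OR m. ran \<tau> \<subseteq> ran \<sigma>}"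
  proof (intro equalityI subsetI)
    fix \<tau> assume "\<tau> \<in> {\<sigma> \<circ>\<^sub>m \<rho> | \<rho>. \<rho> \<in> OR m}"
    then obtain \<rho> where r: "\<tau> = \<sigma> \<circ>\<^sub>m \<rho>" "\<rho> \<in> OR m" by blast
    have "\<tau> \<in> OR m" unfolding r(1) by (rule OR_comp[OF m1 oS r(2)])
    moreover have "ran \<tau> \<subseteq> ran \<sigma>" unfolding r(1) by (rule ran_comp_sub)
    ultimately show "\<tau> \<in> {\<tau> \<in> OR m. ran \<tau> \<subseteq> ran \<sigma>}" by simp
  next
    fix \<tau> assume "\<tau> \<in> {\<tau> \<in> OR m. ran \<tau> \<subseteq> ran \<sigma>}"
    hence t: "\<tau> \<in> OR m" "ran \<tau> \<subseteq> ran \<sigma>" by simp_all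
    have "\<sigma> \<circ>\<^sub>m (minv \<sigma> \<circ>\<^sub>m \<tau>) = \<tau>"
      unfolding mc_assoc[symmetric] comp_minv[OF ps] by (rule comp_idm_l[OF t(2)])
    moreover have "minv \<sigma> \<circ>\<^sub>m \<tau> \<in> OR m" by (rule OR_comp[OF m1 OR_minv[OF m1 oS] t(1)])
    ultimately have "\<exists>\<rho>. \<tau> = \<sigma> \<circ>\<^sub>m \<rho> \<and> \<rho> \<in> OR m" by metis
    thus "\<tau> \<in> {\<sigma> \<circ>\<^sub>m \<rho> | \<rho>. \<rho> \<in> OR m}" by simp
  qed
  have P2: "{\<rho> \<circ>\<^sub>m \<sigma> | \<rho>. \<rho> \<in> OR m} = {\<tau> \<in> OR m. dom \<tau> \<subseteq> dom \<sigma>}"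
  proof (intro equalityI subsetI)
    fix \<tau> assume "\<tau> \<in> {\<rho> \<circ>\<^sub>m \<sigma> | \<rho>. \<rho> \<in> OR m}"
    then obtain \<rho> where r: "\<tau> = \<rho> \<circ>\<^sub>m \<sigma>" "\<rho> \<in> OR m" by blast
    have "\<tau> \<in> OR m" unfolding r(1) by (rule OR_comp[OF m1 r(2) oS])
    moreover have "dom \<tau> \<subseteq> dom \<sigma>" unfolding r(1) dom_comp by auto
    ultimately show "\<tau> \<in> {\<tau> \<in> OR m. dom \<tau> \<subseteq> dom \<sigma>}" by simp
  next
    fix \<tau> assume "\<tau> \<in> {\<tau> \<in> OR m. dom \<tau> \<subseteq> dom \<sigma>}"
    hence t: "\<tau> \<in> OR m" "dom \<tau> \<subseteq> dom \<sigma>" by simp_all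
    have "(\<tau> \<circ>\<^sub>m minv \<sigma>) \<circ>\<^sub>m \<sigma> = \<tau>"
      unfolding mc_assoc minv_comp[OF ps] by (rule comp_idm_r[OF t(2)])
    moreover have "\<tau> \<circ>\<^sub>m minv \<sigma> \<in> OR m" by (rule OR_comp[OF m1 t(1) OR_minv[OF m1 oS]])
    ultimately have "\<exists>\<rho>. \<tau> = \<rho> \<circ>\<^sub>m \<sigma> \<and> \<rho> \<in> OR m" by metis
    thus "\<tau> \<in> {\<rho> \<circ>\<^sub>m \<sigma> | \<rho>. \<rho> \<in> OR m}" by simp
  qed
  let ?T = "{\<rho> \<circ>\<^sub>m \<sigma> \<circ>\<^sub>m \<rho>' | \<rho> \<rho>'. \<rho> \<in> OR m \<and> \<rho>' \<in> OR m}"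
  have Tsub: "\<tau> \<in> OR m \<and> rk \<tau> \<le> rk \<sigma>" if tT0: "\<tau> \<in> ?T" for \<tau>
  proof -
    obtain \<rho> \<rho>' where r: "\<tau> = \<rho> \<circ>\<^sub>m \<sigma> \<circ>\<^sub>m \<rho>'" "\<rho> \<in> OR m" "\<rho>' \<in> OR m" using tT0 by blast
    have o1: "\<rho> \<circ>\<^sub>m \<sigma> \<in> OR m" by (rule OR_comp[OF m1 r(2) oS])
    have "\<tau> \<in> OR m" unfolding r(1) by (rule OR_comp[OF m1 o1 r(3)])
    moreover have "rk \<tau> \<le> rk (\<rho> \<circ>\<^sub>m \<sigma>)" unfolding r(1) by (rule rk_comp_le2[OF piOR[OF o1] piOR[OF r(3)]])
    moreover have "rk (\<rho> \<circ>\<^sub>m \<sigma>) \<le> rk \<sigma>" by (rule rk_comp_le1[OF piOR[OF r(2)] ps])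
    ultimately show ?thesis by simp
  qed
  have memT: "\<tau> \<in> ?T" if "\<exists>\<rho> \<rho>'. \<tau> = \<rho> \<circ>\<^sub>m \<sigma> \<circ>\<^sub>m \<rho>' \<and> \<rho> \<in> OR m \<and> \<rho>' \<in> OR m" for \<tau>
    using that by (simp only: mem_Collect_eq)
  have lowrk: "\<tau> \<in> ?T" if t: "\<tau> \<in> OR m" "small m \<sigma>" "rk \<tau> \<le> rk \<sigma>" "rk \<tau> < m" for \<tau>
  proof -
    have pt: "partial_inj (2*m) \<tau>" by (rule piOR[OF t(1)])
    have "\<tau> \<notin> W' m" using rk_W'[of \<tau> m] t(4) by auto
    hence ts: "small m \<tau>" using t(1) OR_iff[OF m1] by simp
    have "rk \<tau> \<le> card (dom \<sigma>)" using t(3) by (simp add: rk_def)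
    then obtain C where C: "C \<subseteq> dom \<sigma>" "card C = rk \<tau>" "finite C" by (rule obtain_subset_with_card_n)
    have "adm0 m (dom \<sigma>)" using t(2) unfolding small_def by simp
    hence "adm0 m C" using C(1) by (rule adm0_subset)
    moreover have "rk \<tau> = m \<longrightarrow> typeI m (dom \<tau>) = typeI m C" using t(4) by simp
    ultimately have "\<exists>\<rho> \<rho>'. \<tau> = \<rho> \<circ>\<^sub>m \<sigma> \<circ>\<^sub>m \<rho>' \<and> \<rho> \<in> OR m \<and> \<rho>' \<in> OR m"
      by (rule construct[OF m1 oS t(1) ts C(1,2)])
    thus ?thesis by (rule memT)
  qed
  have P3: "rk \<sigma> \<noteq> m \<longrightarrow> ?T = {\<tau> \<in> OR m. rk \<tau> \<le> rk \<sigma>}"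
  proof
    assume rne: "rk \<sigma> \<noteq> m"
    show "?T = {\<tau> \<in> OR m. rk \<tau> \<le> rk \<sigma>}"
    proof (intro equalityI subsetI)
      fix \<tau> assume h: "\<tau> \<in> ?T"
      have "\<tau> \<in> OR m \<and> rk \<tau> \<le> rk \<sigma>" by (rule Tsub[OF h])
      thus "\<tau> \<in> {\<tau> \<in> OR m. rk \<tau> \<le> rk \<sigma>}" by simp
    next
      fix \<tau> assume "\<tau> \<in> {\<tau> \<in> OR m. rk \<tau> \<le> rk \<sigma>}"
      hence t: "\<tau> \<in> OR m" "rk \<tau> \<le> rk \<sigma>" by simp_all
      show "\<tau> \<in> ?T"
      proof (cases "\<sigma> \<in> W' m")
        case True
        have rs: "ran \<sigma> = {1..2*m}" by (rule W_props(5)[OF W'_W[OF True]])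
        have "dom \<tau> \<subseteq> ran \<sigma>" using piOR[OF t(1)] unfolding rs partial_inj_def by simp
        hence "\<tau> \<circ>\<^sub>m \<sigma> \<circ>\<^sub>m minv \<sigma> = \<tau>"
          unfolding mc_assoc comp_minv[OF ps] by (rule comp_idm_r)
        hence "\<tau> = \<tau> \<circ>\<^sub>m \<sigma> \<circ>\<^sub>m minv \<sigma> \<and> \<tau> \<in> OR m \<and> minv \<sigma> \<in> OR m"
          using t(1) OR_minv[OF m1 oS] by simp
        hence "\<exists>\<rho> \<rho>'. \<tau> = \<rho> \<circ>\<^sub>m \<sigma> \<circ>\<^sub>m \<rho>' \<and> \<rho> \<in> OR m \<and> \<rho>' \<in> OR m"
          by (intro exI[of _ \<tau>] exI[of _ "minv \<sigma>"])
        thus ?thesis by (rule memT)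
      next
        case False
        hence ss: "small m \<sigma>" using sS by simp
        hence "adm0 m (dom \<sigma>)" unfolding small_def by simp
        hence "rk \<sigma> \<le> m" unfolding rk_def by (rule adm0_card)
        hence "rk \<tau> < m" using t(2) rne by linarith
        thus ?thesis by (rule lowrk[OF t(1) ss t(2)])
      qed
    qed
  qed
  have P4: "rk \<sigma> = m \<longrightarrow> ?T = {\<tau> \<in> OR m. rk \<tau> < m \<or> (rk \<tau> = m \<and> tp m \<tau> = tp m \<sigma>)}"
  proof
    assume req: "rk \<sigma> = m"
    have "\<sigma> \<notin> W' m" using rk_W'[of \<sigma> m] req m1 by auto
    hence ss: "small m \<sigma>" using sS by simp
    show "?T = {\<tau> \<in> OR m. rk \<tau> < m \<or> (rk \<tau> = m \<and> tp m \<tau> = tp m \<sigma>)}"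
    proof (intro equalityI subsetI)
      fix \<tau> assume tT: "\<tau> \<in> ?T"
      have "\<tau> \<in> OR m \<and> rk \<tau> \<le> rk \<sigma>" by (rule Tsub[OF tT])
      hence t: "\<tau> \<in> OR m" "rk \<tau> \<le> m" using req by simp_all
      have "rk \<tau> < m \<or> (rk \<tau> = m \<and> tp m \<tau> = tp m \<sigma>)"
      proof (cases "rk \<tau> = m")
        case False thus ?thesis using t(2) by simp
      next
        case True
        obtain \<rho> \<rho>' where r: "\<tau> = \<rho> \<circ>\<^sub>m \<sigma> \<circ>\<^sub>m \<rho>'" "\<rho> \<in> OR m" "\<rho>' \<in> OR m" using tT by blast
        have o1: "\<rho> \<circ>\<^sub>m \<sigma> \<in> OR m" by (rule OR_comp[OF m1 r(2) oS])
        have a: "rk \<tau> \<le> rk (\<rho> \<circ>\<^sub>m \<sigma>)" unfolding r(1) by (rule rk_comp_le2[OF piOR[OF o1] piOR[OF r(3)]])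
        have b: "rk (\<rho> \<circ>\<^sub>m \<sigma>) \<le> rk \<sigma>" by (rule rk_comp_le1[OF piOR[OF r(2)] ps])
        have ry: "rk (\<rho> \<circ>\<^sub>m \<sigma>) = m" using a b True req by linarith
        have "dom (\<rho> \<circ>\<^sub>m \<sigma>) \<subseteq> dom \<sigma>" unfolding dom_comp by auto
        moreover have "card (dom (\<rho> \<circ>\<^sub>m \<sigma>)) = card (dom \<sigma>)" using ry req by (simp add: rk_def)
        ultimately have dy: "dom (\<rho> \<circ>\<^sub>m \<sigma>) = dom \<sigma>"
          using pi_finite[OF ps] by (metis card_subset_eq)
        have "typeI m (dom \<tau>) = typeI m (dom (\<rho> \<circ>\<^sub>m \<sigma>))"
          unfolding r(1) by (rule L_dom[OF m1 o1 ry r(3)]) (use True r(1) in simp)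
        thus ?thesis using True dy by (simp add: tp_def)
      qed
      thus "\<tau> \<in> {\<tau> \<in> OR m. rk \<tau> < m \<or> (rk \<tau> = m \<and> tp m \<tau> = tp m \<sigma>)}" using t(1) by simp
    next
      fix \<tau> assume "\<tau> \<in> {\<tau> \<in> OR m. rk \<tau> < m \<or> (rk \<tau> = m \<and> tp m \<tau> = tp m \<sigma>)}"
      hence t: "\<tau> \<in> OR m" "rk \<tau> < m \<or> (rk \<tau> = m \<and> tp m \<tau> = tp m \<sigma>)" by simp_all
      show "\<tau> \<in> ?T"
      proof (cases "rk \<tau> < m")
        case True
        have "rk \<tau> \<le> rk \<sigma>" using True req by simp
        thus ?thesis by (rule lowrk[OF t(1) ss _ True])
      next
        case False
        hence tr: "rk \<tau> = m" "tp m \<tau> = tp m \<sigma>" using t(2) by simp_all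
        have "\<tau> \<notin> W' m" using rk_W'[of \<tau> m] tr m1 by auto
        hence ts: "small m \<tau>" using t(1) OR_iff[OF m1] by simp
        have "adm0 m (dom \<sigma>)" using ss unfolding small_def by simp
        moreover have "card (dom \<sigma>) = rk \<tau>" using req tr by (simp add: rk_def)
        moreover have "typeI m (dom \<tau>) = typeI m (dom \<sigma>)" using tr(2) by (simp add: tp_def)
        ultimately have "\<exists>\<rho> \<rho>'. \<tau> = \<rho> \<circ>\<^sub>m \<sigma> \<circ>\<^sub>m \<rho>' \<and> \<rho> \<in> OR m \<and> \<rho>' \<in> OR m"
          by (intro construct[OF m1 oS t(1) ts order_refl]) simp_all
        thus ?thesis by (rule memT)
      qed
    qed
  qed
  show ?thesis by (rule conjI[OF P1 conjI[OF P2 conjI[OF P3 P4]]])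
qed

end
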